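(* Let $n\ge1$, $w\in\mathbb{R}^n$ with $w\neq0$, and $\lambda>0$. Let $(\alpha^*,b^* )$ be a minimizer of $$\min_{\alpha>0,\; b\in\{-1,0,1\}^n}\; \tfrac12\sum_{i=1}^n \lambda(\alpha b_i - w_i)^2,$$ and set $\Delta^*=\alpha^*/2$. Then the set $S=\{i: |w_i|>\Delta^*\}$ is nonempty, $$\alpha^*=\frac{1}{|S|}\sum_{i\in S}|w_i|,$$ and $\Delta^*$ is a maximizer, over $\Delta\in(0,\max_i|w_i|)$, of $$F(\Delta)=\frac{1}{|\{i:|w_i|>\Delta\}|}\Big(\sum_{i:\,|w_i|>\Delta}|w_i|\Big)^2 .$$ That is, $\alpha^*$ coincides with the ternary-weight-network scaling with threshold $\Delta^*=\alpha^*/2$.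
   Context: This is the case of a layer-wise loss-aware ternarization problem $\min \tfrac12\|\alpha b-w\|_{D}^2$ in which the diagonal curvature matrix is $D=\lambda I$. *)

theory Defs
  imports "HOL-Analysis.Analysis"
begin

definition ternary :: "real ^ 'n \<Rightarrow> bool" where
  "ternary b \<longleftrightarrow> (\<forall>i. b $ i \<in> {-1, 0, 1})"

text \<open>Loss-aware objective with diagonal curvature D = lambda I.\<close>
definition tern_obj :: "real \<Rightarrow> real ^ 'n \<Rightarrow> real \<Rightarrow> real ^ 'n \<Rightarrow> real" where
  "tern_obj lam w \<alpha> b = (1/2) * (\<Sum>i\<in>UNIV. lam * (\<alpha> * b $ i - w $ i)^2)"

definition above :: "real ^ 'n \<Rightarrow> real \<Rightarrow> 'n set" where
  "above w \<Delta> = {i. \<bar>w $ i\<bar> > \<Delta>}"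

definition twnF :: "real ^ 'n \<Rightarrow> real \<Rightarrow> real" where
  "twnF w \<Delta> = (\<Sum>i\<in>above w \<Delta>. \<bar>w $ i\<bar>)^2 / real (card (above w \<Delta>))"

end

theory Submission
  imports Defs
begin

definition bT :: "real ^ 'n \<Rightarrow> 'n set \<Rightarrow> real ^ 'n" where
  "bT w T = (\<chi> i. if i \<in> T then (if w $ i \<ge> 0 then 1 else -1) else 0)"

lemma bT_tern: "ternary (bT w T)"
  by (auto simp: ternary_def bT_def)

lemma obj_bT:
  fixes w :: "real ^ 'n"
  shows "tern_obj lam w a (bT w T) = lam/2 * (real (card T) * a^2 - 2*a*(\<Sum>i\<in>T. \<bar>w$i\<bar>) + (\<Sum>i\<in>UNIV. (w$i)^2))"
proof -
  have pt: "\<And>i. lam*(a*bT w T $ i - w$i)^2 = lam*((if i\<in>T then a^2 - 2*a*\<bar>w$i\<bar> else 0) + (w$i)^2)"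
    by (auto simp: bT_def power2_eq_square algebra_simps abs_if)
  have "tern_obj lam w a (bT w T) = 1/2 * (\<Sum>i\<in>UNIV. lam*((if i\<in>T then a^2 - 2*a*\<bar>w$i\<bar> else 0) + (w$i)^2))"
    by (simp only: tern_obj_def pt)
  also have "\<dots> = lam/2 * ((\<Sum>i\<in>UNIV. (if i\<in>T then a^2 - 2*a*\<bar>w$i\<bar> else 0)) + (\<Sum>i\<in>UNIV. (w$i)^2))"
    by (simp add: sum.distrib sum_distrib_left[symmetric])
  also have "(\<Sum>i\<in>UNIV. (if i\<in>T then a^2 - 2*a*\<bar>w$i\<bar> else 0)) = (\<Sum>i\<in>T. a^2 - 2*a*\<bar>w$i\<bar>)"
    by (simp add: sum.If_cases)
  also have "\<dots> = real (card T) * a^2 - 2*a*(\<Sum>i\<in>T. \<bar>w$i\<bar>)"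
    by (simp add: sum_subtractf sum_distrib_left)
  finally show ?thesis .
qed

lemma pt_min:
  fixes a x bi :: real
  assumes "a > 0" "bi \<in> {-1,0,1}"
  shows "(a * bi - x)^2 \<ge> (a * (if \<bar>x\<bar> > a/2 then (if x \<ge> 0 then 1 else -1) else 0) - x)^2"
proof -
  have c: "bi = -1 \<or> bi = 0 \<or> bi = 1" using assms(2) by auto
  show ?thesis
  proof (cases "\<bar>x\<bar> > a/2")
    case True
    have h: "a*(2*\<bar>x\<bar>-a) \<ge> 0" "a*\<bar>x\<bar> \<ge> 0" "x \<ge> 0 \<Longrightarrow> a*x \<ge> 0" "x \<le> 0 \<Longrightarrow> a*x \<le> 0"
      using True assms(1) by (auto simp: mult_nonneg_nonpos)
    then show ?thesis using c True
      using assms(1) by (cases "x \<ge> 0") (auto simp: power2_eq_square abs_if algebra_simps; smt (verit) mult_nonneg_nonneg mult_nonneg_nonpos zero_le_square)+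
  next
    case False
    have h: "a*(a-2*\<bar>x\<bar>) \<ge> 0" "a*\<bar>x\<bar> \<ge> 0" "x \<ge> 0 \<Longrightarrow> a*x \<ge> 0" "x \<le> 0 \<Longrightarrow> a*x \<le> 0"
      using False assms(1) by (auto simp: mult_nonneg_nonpos)
    then show ?thesis using c False
      using assms(1) by (cases "x \<ge> 0") (auto simp: power2_eq_square abs_if algebra_simps; smt (verit) mult_nonneg_nonneg mult_nonneg_nonpos zero_le_square)+
  qed
qed

lemma Q_opt:
  fixes k c a lam W :: real
  assumes "k > 0" "lam > 0"
  shows "lam/2 * (k * (c/k)^2 - 2*(c/k)*c + W) = lam/2 * (W - c^2/k)"
  using assms by (simp add: field_simps power2_eq_square)

theorem corollary1:
  fixes w :: "real ^ 'n" and lam \<alpha> :: real and b :: "real ^ 'n"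
  assumes "w \<noteq> 0" and "lam > 0"
    and "\<alpha> > 0" and "ternary b"
    and "\<forall>\<alpha>' b'. \<alpha>' > 0 \<and> ternary b' \<longrightarrow> tern_obj lam w \<alpha> b \<le> tern_obj lam w \<alpha>' b'"
  shows "above w (\<alpha>/2) \<noteq> {}
    \<and> \<alpha> = (\<Sum>i\<in>above w (\<alpha>/2). \<bar>w $ i\<bar>) / real (card (above w (\<alpha>/2)))
    \<and> \<alpha>/2 \<in> {0<..<(MAX i. \<bar>w $ i\<bar>)}
    \<and> (\<forall>\<Delta>\<in>{0<..<(MAX i. \<bar>w $ i\<bar>)}. twnF w \<Delta> \<le> twnF w (\<alpha>/2))"
proof -
  define V where "V = tern_obj lam w \<alpha> b"
  define S where "S = above w (\<alpha>/2)"
  define W where "W = (\<Sum>i\<in>UNIV. (w$i)^2)"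
  define Q where "Q = (\<lambda>T a. lam/2 * (real (card T) * a^2 - 2*a*(\<Sum>i\<in>T. \<bar>w$i\<bar>) + W))"
  have QT: "\<And>T a. tern_obj lam w a (bT w T) = Q T a" unfolding Q_def W_def by (rule obj_bT)
  have opt: "\<And>T a. a > 0 \<Longrightarrow> V \<le> Q T a" using assms(5) bT_tern QT unfolding V_def by metis
  have A: "Q S \<alpha> \<le> V"
  proof -
    have "\<And>i. (\<alpha> * bT w S $ i - w$i)^2 \<le> (\<alpha> * b $ i - w $ i)^2"
    proof -
      fix i
      have "b $ i \<in> {-1,0,1}" using assms(4) by (simp add: ternary_def)
      from pt_min[OF assms(3) this, of "w$i"] show "(\<alpha> * bT w S $ i - w$i)^2 \<le> (\<alpha> * b $ i - w $ i)^2"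
        by (simp add: bT_def S_def above_def)
    qed
    hence "(\<Sum>i\<in>UNIV. lam * (\<alpha> * bT w S $ i - w$i)^2) \<le> (\<Sum>i\<in>UNIV. lam * (\<alpha> * b $ i - w $ i)^2)"
      using assms(2) by (intro sum_mono) (simp add: mult_left_mono)
    thus ?thesis using QT[of \<alpha> S] unfolding V_def tern_obj_def by simp
  qed
  have VQ: "V = Q S \<alpha>" using A opt[OF assms(3), of S] by linarith
  have ne: "S \<noteq> {}"
  proof
    assume "S = {}"
    hence V0: "V = lam/2 * W" using VQ unfolding Q_def by simp
    obtain i where wi: "w $ i \<noteq> 0" using assms(1) by (metis vec_eq_iff zero_index)
    have "V \<le> Q {i} \<bar>w$i\<bar>" using opt wi by simp
    also have "\<dots> = lam/2 * (W - (w$i)^2)" unfolding Q_def by (simp add: power2_eq_square)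
    finally show False using V0 wi assms(2) by (simp add: field_simps mult_le_0_iff)
  qed
  define k where "k = real (card S)"
  define c where "c = (\<Sum>i\<in>S. \<bar>w$i\<bar>)"
  have kpos: "k > 0" using ne unfolding k_def by (simp add: card_gt_0_iff)
  have Spos: "\<And>i. i \<in> S \<Longrightarrow> \<bar>w$i\<bar> > \<alpha>/2" unfolding S_def above_def by simp
  have cpos: "c > 0" unfolding c_def using ne Spos assms(3)
    by (intro sum_pos) (auto, smt (verit) Spos)
  have "V \<le> Q S (c/k)" using opt cpos kpos by simp
  hence "Q S \<alpha> \<le> Q S (c/k)" using VQ by simp
  moreover have "\<And>a. Q S a = lam/2 * (k*a^2 - 2*a*c + W)" unfolding Q_def k_def c_def by simp
  ultimately have "lam/2 * (k*\<alpha>^2 - 2*\<alpha>*c + W) \<le> lam/2 * (k*(c/k)^2 - 2*(c/k)*c + W)"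
    by simp
  hence "lam/2 * (k*\<alpha>^2 - 2*\<alpha>*c) \<le> lam/2 * (k*(c/k)^2 - 2*(c/k)*c)"
    by (simp add: distrib_left)
  hence "k*\<alpha>^2 - 2*\<alpha>*c \<le> k*(c/k)^2 - 2*(c/k)*c" using assms(2) by simp
  moreover have "k*(\<alpha>-c/k)^2 = (k*\<alpha>^2 - 2*\<alpha>*c) - (k*(c/k)^2 - 2*(c/k)*c)"
  proof -
    have kc: "k*(c/k) = c" using kpos by simp
    have "k*(\<alpha>-c/k)^2 = k*\<alpha>^2 - 2*\<alpha>*(k*(c/k)) + (k*(c/k))*(c/k)"
      by (simp add: power2_eq_square algebra_simps)
    moreover have "k*(c/k)^2 = (k*(c/k))*(c/k)" by (simp add: power2_eq_square)
    ultimately show ?thesis unfolding kc by simp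
  qed
  ultimately have "k * (\<alpha> - c/k)^2 \<le> 0" by linarith
  hence "(\<alpha> - c/k)^2 \<le> 0" using kpos by (simp add: mult_le_0_iff)
  hence aeq: "\<alpha> = c/k" by simp
  define M where "M = (MAX i. \<bar>w $ i\<bar>)"
  have Mge: "\<And>i. \<bar>w$i\<bar> \<le> M" unfolding M_def by simp
  have "M \<in> range (\<lambda>i. \<bar>w$i\<bar>)" unfolding M_def by (rule Max_in) auto
  then obtain j where j: "\<bar>w$j\<bar> = M" by auto
  obtain i0 where i0: "i0 \<in> S" using ne by auto
  have int: "\<alpha>/2 \<in> {0<..<M}"
    using Spos[OF i0] Mge[of i0] assms(3) by simp
  have VF: "V = lam/2 * (W - twnF w (\<alpha>/2))"
    using VQ aeq Q_opt[OF kpos assms(2), of c W] unfolding Q_def twnF_def k_def c_def S_def by simp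
  have F: "\<forall>\<Delta>\<in>{0<..<M}. twnF w \<Delta> \<le> twnF w (\<alpha>/2)"
  proof
    fix \<Delta> assume D: "\<Delta> \<in> {0<..<M}"
    define T where "T = above w \<Delta>"
    define kT where "kT = real (card T)"
    define cT where "cT = (\<Sum>i\<in>T. \<bar>w$i\<bar>)"
    have jT: "j \<in> T" using D j unfolding T_def above_def by simp
    have kTpos: "kT > 0" using jT unfolding kT_def by (auto simp: card_gt_0_iff)
    have cTpos: "cT > 0" unfolding cT_def using jT D
      by (intro sum_pos) (auto simp: T_def above_def)
    have "V \<le> Q T (cT/kT)" using opt cTpos kTpos by simp
    also have "\<dots> = lam/2 * (W - twnF w \<Delta>)"
      using Q_opt[OF kTpos assms(2), of cT W] unfolding Q_def twnF_def kT_def cT_def T_def by simp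
    finally show "twnF w \<Delta> \<le> twnF w (\<alpha>/2)" using VF assms(2) by simp
  qed
  show ?thesis using ne aeq int F unfolding S_def M_def k_def c_def by simp
qed

end
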